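(* For every positive integer $n$, \[ \sum_{k=1}^{n}{n\brace k}\binom{-1/2}{k}k!\,H_k\,(-1)^n2^n=\sum_{k=0}^{n-1}\binom{n}{k+1}E_k(1). \]
   Context: ${n\brace k}$ is the Stirling number of the second kind, $H_k=\sum_{i=1}^k1/i$, $\binom{x}{k}=x(x-1)\cdots(x-k+1)/k!$. The Euler polynomials $E_n(x)$ are defined by $\sum_{n\ge0}E_n(x)\frac{t^n}{n!}=\frac{2}{e^t+1}e^{xt}$. *)

theory Defs
  imports "HOL-Analysis.Analysis" "HOL-Combinatorics.Stirling"
    "HOL-Computational_Algebra.Formal_Power_Series"
begin

definition euler_poly :: "nat \<Rightarrow> real \<Rightarrow> real" where
  "euler_poly n x = fact n * fps_nth (fps_const 2 * fps_exp x / (fps_exp 1 + 1)) n"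

end

theory Submission
  imports Defs
begin

lemma pow_exp_nth:
  "fps_nth ((fps_exp (a::real) - 1) ^ k) n = a ^ n * real (Stirling n k) * fact k / fact n"
proof (induction n arbitrary: k)
  case 0
  then show ?case by (cases k) auto
next
  case (Suc n)
  show ?case
  proof (cases k)
    case 0
    then show ?thesis by simp
  next
    case (Suc j)
    have d: "fps_deriv ((fps_exp a - 1) ^ Suc j)
        = fps_const (a * of_nat (Suc j)) * ((fps_exp a - 1) ^ Suc j + (fps_exp a - 1) ^ j)"
    proof -
      have "fps_deriv ((fps_exp a - 1) ^ Suc j)
          = fps_const (of_nat (Suc j)) * (fps_const a * fps_exp a) * (fps_exp a - 1) ^ j"
        by (simp only: fps_deriv_power) simp
      also have "fps_exp a * (fps_exp a - 1) ^ j = (fps_exp a - 1) ^ Suc j + (fps_exp a - 1) ^ j"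
        by (simp add: algebra_simps)
      hence "fps_const (of_nat (Suc j)) * (fps_const a * fps_exp a) * (fps_exp a - 1) ^ j
          = fps_const (of_nat (Suc j)) * fps_const a * ((fps_exp a - 1) ^ Suc j + (fps_exp a - 1) ^ j)"
        by (metis mult.assoc)
      finally show ?thesis
        by (simp add: mult.commute)
    qed
    have "fps_nth (fps_deriv ((fps_exp a - 1) ^ Suc j)) n
        = a * of_nat (Suc j) * (fps_nth ((fps_exp a - 1) ^ Suc j) n + fps_nth ((fps_exp a - 1) ^ j) n)"
      unfolding d by (simp del: power_Suc)
    moreover have "fps_nth (fps_deriv ((fps_exp a - 1) ^ Suc j)) n
       = of_nat (Suc n) * fps_nth ((fps_exp a - 1) ^ Suc j) (Suc n)"
      by (simp del: power_Suc)
    ultimately have "of_nat (Suc n) * fps_nth ((fps_exp a - 1) ^ Suc j) (Suc n)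
        = a * of_nat (Suc j) * (a ^ n * real (Stirling n (Suc j)) * fact (Suc j) / fact n
           + a ^ n * real (Stirling n j) * fact j / fact n)"
      using Suc.IH[of "Suc j"] Suc.IH[of j] by (simp del: power_Suc)
    hence "fps_nth ((fps_exp a - 1) ^ Suc j) (Suc n)
        = a * of_nat (Suc j) * (a ^ n * real (Stirling n (Suc j)) * fact (Suc j) / fact n
           + a ^ n * real (Stirling n j) * fact j / fact n) / of_nat (Suc n)"
      by (simp add: field_simps del: of_nat_Suc)
    also have "\<dots> = a ^ Suc n * real (Stirling (Suc n) (Suc j)) * fact (Suc j) / fact (Suc n)"
      by (simp add: field_simps)
    finally show ?thesis using Suc by simp
  qed
qed

lemma w0: "fps_nth (fps_exp (-2::real) - 1) 0 = 0" by simp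

lemma comp_binom_exp: "fps_binomial (-1/2::real) oo (fps_exp (-2) - 1) = fps_exp 1"
proof -
  define w where "w = fps_exp (-2::real) - 1"
  define Bw where "Bw = fps_binomial (-1/2::real) oo w"
  have w0': "fps_nth w 0 = 0" by (simp add: w_def)
  have "Bw ^ 2 = fps_binomial (-1/2) ^ 2 oo w"
    unfolding Bw_def by (rule fps_compose_power[OF w0'])
  also have "fps_binomial (-1/2::real) ^ 2 = fps_binomial (-1)"
    by (simp add: fps_binomial_power)
  also have "fps_binomial (-1::real) = inverse (1 + fps_X)"
    by (rule fps_binomial_minus_one)
  finally have sq: "Bw ^ 2 = inverse (1 + fps_X) oo w" .
  have ex: "fps_exp (-2) = (1 + fps_X) oo w"
    using w0' by (simp add: fps_compose_add_distrib w_def)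
  have "(inverse (1 + fps_X) oo w) * ((1 + fps_X) oo w) = (inverse (1 + fps_X) * (1 + fps_X)) oo w"
    by (rule fps_compose_mult_distrib[OF w0', symmetric])
  also have "inverse (1 + fps_X) * (1 + fps_X) = (1 :: real fps)"
    by (rule inverse_mult_eq_1) simp
  finally have "Bw ^ 2 * fps_exp (-2) = 1" using sq ex by simp
  moreover have "fps_exp (1::real) ^ 2 * fps_exp (-2) = 1"
    by (simp add: power2_eq_square fps_exp_add_mult[symmetric])
  ultimately have "Bw ^ 2 * fps_exp (-2) = fps_exp 1 ^ 2 * fps_exp (-2)" by simp
  hence "Bw ^ 2 = fps_exp 1 ^ 2" by simp
  hence "(Bw - fps_exp 1) * (Bw + fps_exp 1) = 0"
    by (simp add: algebra_simps power2_eq_square)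
  moreover have "Bw + fps_exp 1 \<noteq> 0"
  proof
    assume "Bw + fps_exp 1 = 0"
    hence "fps_nth (Bw + fps_exp 1) 0 = 0" by simp
    thus False by (simp add: Bw_def)
  qed
  ultimately have "Bw = fps_exp 1" by simp
  thus ?thesis by (simp add: Bw_def w_def)
qed

definition Cf :: "real fps" where "Cf = Abs_fps (\<lambda>k. (-1/2::real) gchoose (k+1))"

definition Tn :: "nat \<Rightarrow> real" where
  "Tn n = (-2) ^ (n+1) * (\<Sum>k\<le>n. real (Stirling n k) * fact k * ((-1/2::real) gchoose (k+1)))"

lemma XC: "fps_X * Cf = fps_binomial (-1/2) - 1"
  by (rule fps_ext) (simp add: Cf_def)

lemma wC: "(fps_exp (-2) - 1) * (Cf oo (fps_exp (-2) - 1)) = fps_exp 1 - 1"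
proof -
  have "(fps_exp (-2) - 1) * (Cf oo (fps_exp (-2) - 1))
      = (fps_X oo (fps_exp (-2::real) - 1)) * (Cf oo (fps_exp (-2) - 1))" by simp
  also have "\<dots> = (fps_X * Cf) oo (fps_exp (-2) - 1)"
    by (rule fps_compose_mult_distrib[OF w0, symmetric])
  also have "\<dots> = fps_exp 1 - 1"
    unfolding XC using comp_binom_exp by (simp add: fps_compose_sub_distrib)
  finally show ?thesis .
qed

lemma Tegf: "Abs_fps (\<lambda>n. Tn n / fact n) = fps_const (-2) * (Cf oo (fps_exp (-2) - 1))"
proof (rule fps_ext)
  fix n
  have "fps_nth (fps_const (-2) * (Cf oo (fps_exp (-2) - 1))) n
      = -2 * (\<Sum>i=0..n. ((-1/2::real) gchoose (i+1)) * ((-2) ^ n * real (Stirling n i) * fact i / fact n))"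
    by (simp add: fps_compose_nth pow_exp_nth Cf_def)
  also have "\<dots> = Tn n / fact n"
    by (simp add: Tn_def sum_divide_distrib sum_distrib_left atLeast0AtMost algebra_simps)
  finally show "fps_nth (Abs_fps (\<lambda>n. Tn n / fact n)) n
      = fps_nth (fps_const (-2) * (Cf oo (fps_exp (-2) - 1))) n" by simp
qed

definition Eu :: "real fps" where "Eu = fps_const 2 * fps_exp 1 / (fps_exp 1 + 1)"

lemma euler_poly_1: "euler_poly k 1 = fact k * fps_nth Eu k"
  by (simp add: euler_poly_def Eu_def)

lemma Eu_mult: "Eu * (fps_exp 1 + 1) = fps_const 2 * fps_exp 1"
proof -
  have nz: "fps_nth (fps_exp (1::real) + 1) 0 \<noteq> 0" by simp
  have "Eu = fps_const 2 * fps_exp 1 * inverse (fps_exp 1 + 1)"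
    unfolding Eu_def by (rule fps_divide_unit[OF nz])
  hence "Eu * (fps_exp 1 + 1) = fps_const 2 * fps_exp 1 * (inverse (fps_exp 1 + 1) * (fps_exp 1 + 1))"
    by (simp add: mult.assoc)
  also have "inverse (fps_exp 1 + 1) * (fps_exp 1 + 1) = (1::real fps)"
    by (rule inverse_mult_eq_1[OF nz])
  finally show ?thesis by simp
qed

lemma Tegf_eq: "Abs_fps (\<lambda>n. Tn n / fact n) = Eu * fps_exp 1"
proof -
  define T where "T = Abs_fps (\<lambda>n. Tn n / fact n)"
  define E where "E = fps_exp (1::real)"
  define w where "w = fps_exp (-2::real) - 1"
  have EE: "E * E * fps_exp (-2) = 1"
    by (simp add: E_def fps_exp_add_mult[symmetric])
  have "T * (E + 1) * w = fps_const (-2) * (w * (Cf oo w)) * (E + 1)"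
    by (simp add: T_def Tegf w_def algebra_simps)
  also have "\<dots> = fps_const (-2) * (E - 1) * (E + 1)"
    using wC by (simp add: w_def E_def)
  also have "\<dots> = fps_const 2 * (1 - E * E)"
    by (simp add: algebra_simps fps_const_neg[symmetric] del: fps_const_neg)
  also have "\<dots> = fps_const 2 * (E * E * fps_exp (-2) - E * E)"
    using EE by simp
  also have "\<dots> = (fps_const 2 * E) * E * w"
    by (simp add: w_def algebra_simps)
  also have "\<dots> = (Eu * (E + 1)) * E * w"
    by (simp only: Eu_mult E_def)
  finally have "(T - Eu * E) * ((E + 1) * w) = 0"
    by (simp add: algebra_simps)
  moreover have "E + 1 \<noteq> 0"
  proof
    assume "E + 1 = 0"
    hence "fps_nth (E + 1) 0 = 0" by simp
    thus False by (simp add: E_def)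
  qed
  moreover have "w \<noteq> 0"
  proof
    assume "w = 0"
    hence "fps_nth w 1 = 0" by simp
    thus False by (simp add: w_def)
  qed
  ultimately have "T = Eu * E" by simp
  thus ?thesis by (simp add: T_def E_def)
qed

lemma Tn_eq: "Tn n = (\<Sum>i\<le>n. real (n choose i) * euler_poly i 1)"
proof -
  have "Tn n / fact n = fps_nth (Eu * fps_exp 1) n"
    using Tegf_eq[symmetric] by (metis fps_nth_Abs_fps)
  also have "\<dots> = (\<Sum>i=0..n. fps_nth Eu i * (1 / fact (n - i)))"
    by (simp add: fps_mult_nth)
  finally have "Tn n = fact n * (\<Sum>i\<le>n. fps_nth Eu i * (1 / fact (n - i)))"
    by (simp add: atLeast0AtMost field_simps)
  also have "\<dots> = (\<Sum>i\<le>n. real (n choose i) * euler_poly i 1)"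
    unfolding sum_distrib_left
  proof (rule sum.cong)
    fix i assume "i \<in> {..n}"
    hence "i \<le> n" by simp
    thus "fact n * (fps_nth Eu i * (1 / fact (n - i))) = real (n choose i) * euler_poly i 1"
      by (simp add: euler_poly_1 binomial_fact field_simps)
  qed simp
  finally show ?thesis .
qed

definition gg :: "nat \<Rightarrow> real" where
  "gg k = ((-1/2::real) gchoose k) * fact k * harm k"

definition FF :: "nat \<Rightarrow> real" where
  "FF n = (\<Sum>k\<le>n. real (Stirling n k) * gg k)"

definition RR :: "nat \<Rightarrow> real" where
  "RR n = (\<Sum>k<n. real (n choose (k+1)) * euler_poly k 1)"

lemma gg_step: "real k * gg k + gg (Suc k) = (-1/2) * gg k + fact k * ((-1/2::real) gchoose (k+1))"
proof -
  define c where "c = (\<lambda>k. (-1/2::real) gchoose k)"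
  have m: "(-1/2) * c k = real k * c k + real (Suc k) * c (Suc k)"
    unfolding c_def by (rule gbinomial_mult_1)
  have h: "harm (Suc k) = harm k + 1 / real (Suc k)"
    by (simp add: harm_Suc divide_inverse)
  have "gg (Suc k) = (real (Suc k) * c (Suc k)) * fact k * harm k + c (Suc k) * fact k"
    unfolding gg_def c_def[symmetric] h by (simp add: field_simps)
  also have "real (Suc k) * c (Suc k) = (-1/2) * c k - real k * c k" using m by simp
  finally show ?thesis unfolding gg_def c_def[symmetric] by (simp add: algebra_simps)
qed

lemma FF_Suc: "FF (Suc n) = (-1/2) * FF n
   + (\<Sum>k\<le>n. real (Stirling n k) * fact k * ((-1/2::real) gchoose (k+1)))"
proof -
  define h where "h = (\<lambda>k. real k * real (Stirling n k) * gg k)"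
  have "FF (Suc n) = (\<Sum>j\<le>n. real (Stirling (Suc n) (Suc j)) * gg (Suc j))"
    unfolding FF_def by (subst sum.atMost_Suc_shift) simp
  also have "\<dots> = (\<Sum>j\<le>n. h (Suc j)) + (\<Sum>j\<le>n. real (Stirling n j) * gg (Suc j))"
    by (simp add: h_def sum.distrib algebra_simps)
  also have "(\<Sum>j\<le>n. h (Suc j)) = (\<Sum>k\<le>n. h k)"
  proof -
    have "(\<Sum>k\<le>Suc n. h k) = h 0 + (\<Sum>j\<le>n. h (Suc j))" by (rule sum.atMost_Suc_shift)
    moreover have "(\<Sum>k\<le>Suc n. h k) = (\<Sum>k\<le>n. h k) + h (Suc n)" by simp
    ultimately show ?thesis by (simp add: h_def)
  qed
  also have "(\<Sum>k\<le>n. h k) + (\<Sum>j\<le>n. real (Stirling n j) * gg (Suc j))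
     = (\<Sum>k\<le>n. real (Stirling n k) * (real k * gg k + gg (Suc k)))"
    by (simp add: h_def sum.distrib algebra_simps)
  also have "\<dots> = (\<Sum>k\<le>n. real (Stirling n k) * ((-1/2) * gg k + fact k * ((-1/2::real) gchoose (k+1))))"
    by (simp only: gg_step)
  also have "\<dots> = (-1/2) * FF n + (\<Sum>k\<le>n. real (Stirling n k) * fact k * ((-1/2::real) gchoose (k+1)))"
    unfolding FF_def sum_distrib_left sum.distrib[symmetric]
    by (rule sum.cong) (simp_all add: algebra_simps)
  finally show ?thesis .
qed

lemma RR_Suc: "RR (Suc n) = RR n + (\<Sum>i\<le>n. real (n choose i) * euler_poly i 1)"
proof -
  have "RR (Suc n) = (\<Sum>k<Suc n. real (n choose (k+1)) * euler_poly k 1)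
      + (\<Sum>k<Suc n. real (n choose k) * euler_poly k 1)"
    by (simp add: RR_def sum.distrib algebra_simps del: sum.lessThan_Suc)
  also have "(\<Sum>k<Suc n. real (n choose (k+1)) * euler_poly k 1) = RR n"
    by (simp add: RR_def)
  finally show ?thesis by (simp add: lessThan_Suc_atMost)
qed

lemma main_eq: "(-1) ^ n * 2 ^ n * FF n = RR n"
proof (induction n)
  case 0
  then show ?case by (simp add: FF_def RR_def gg_def harm_def)
next
  case (Suc n)
  have "(-1) ^ Suc n * 2 ^ Suc n * FF (Suc n) = (-1) ^ n * 2 ^ n * FF n + Tn n"
    unfolding FF_Suc Tn_def by (simp add: algebra_simps power_mult_distrib[symmetric])
  also have "\<dots> = RR (Suc n)" using Suc.IH by (simp add: RR_Suc Tn_eq)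
  finally show ?case .
qed

theorem mainTheorem9:
  fixes n :: nat
  assumes "n \<ge> 1"
  shows "(\<Sum>k=1..n. real (Stirling n k) * ((-1/2 :: real) gchoose k) * fact k * harm k
            * (-1) ^ n * 2 ^ n)
         = (\<Sum>k=0..n-1. real (n choose (k+1)) * euler_poly k 1)"
proof -
  have "(\<Sum>k=1..n. real (Stirling n k) * ((-1/2 :: real) gchoose k) * fact k * harm k
            * (-1) ^ n * 2 ^ n) = (-1) ^ n * 2 ^ n * (\<Sum>k=1..n. real (Stirling n k) * gg k)"
    by (simp add: sum_distrib_left gg_def algebra_simps)
  also have "(\<Sum>k=1..n. real (Stirling n k) * gg k) = FF n"
  proof -
    have "{..n} = insert 0 {1..n}" by auto
    thus ?thesis by (simp add: FF_def gg_def harm_def)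
  qed
  also have "\<dots> * 0 + (-1) ^ n * 2 ^ n * FF n = RR n" by (simp add: main_eq)
  also have "{0..n-1} = {..<n}" using assms by auto
  hence "RR n = (\<Sum>k=0..n-1. real (n choose (k+1)) * euler_poly k 1)" by (simp add: RR_def)
  finally show ?thesis by simp
qed

end
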